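(* Let $\lambda_0,\lambda_1,\lambda_2$ be positive integers with height $h=\lambda_0+\lambda_1+\lambda_2$. For each labelling $\{i,j,k\}=\{0,1,2\}$ consider the transformed triple $\left(\lambda_j,\lambda_k,\frac{(\lambda_j+\lambda_k)^2}{\lambda_i}\right)$, with height $h_i=\lambda_j+\lambda_k+\frac{(\lambda_j+\lambda_k)^2}{\lambda_i}$. Then there is at most one index $i\in\{0,1,2\}$ with $h_i\le h$. Moreover, if $h_i=h$ then the transformed triple is a permutation of $(\lambda_0,\lambda_1,\lambda_2)$. *)

theory Defs
  imports Complex_Main "HOL-Library.Multiset"
begin

(* A triple (lambda_0, lambda_1, lambda_2) of positive integers is represented
   by a function l :: nat => nat, of which only l 0, l 1, l 2 matter. *)

definition height :: "(nat \<Rightarrow> nat) \<Rightarrow> real" where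
  "height l = real (l 0) + real (l 1) + real (l 2)"

definition transformed :: "(nat \<Rightarrow> nat) \<Rightarrow> nat \<Rightarrow> nat \<Rightarrow> nat \<Rightarrow> real list" where
  "transformed l i j k =
     [real (l j), real (l k), (real (l j) + real (l k))^2 / real (l i)]"

definition theight :: "(nat \<Rightarrow> nat) \<Rightarrow> nat \<Rightarrow> nat \<Rightarrow> nat \<Rightarrow> real" where
  "theight l i j k = real (l j) + real (l k) + (real (l j) + real (l k))^2 / real (l i)"

definition other1 :: "nat \<Rightarrow> nat" where "other1 i = (if i = 0 then 1 else 0)"
definition other2 :: "nat \<Rightarrow> nat" where "other2 i = (if i = 2 then 1 else 2)"

definition h_idx :: "(nat \<Rightarrow> nat) \<Rightarrow> nat \<Rightarrow> real" where
  "h_idx l i = theight l i (other1 i) (other2 i)"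

end

theory Submission
  imports Defs
begin

lemma key_le:
  fixes a x :: real assumes "a > 0" "x > 0"
  shows "x + x^2/a \<le> a + x \<longleftrightarrow> x \<le> a"
proof -
  have "x + x^2/a \<le> a + x \<longleftrightarrow> x^2 \<le> a^2"
    using assms by (simp add: field_simps power2_eq_square)
  also have "\<dots> \<longleftrightarrow> x \<le> a" using assms by (simp add: power_mono_iff)
  finally show ?thesis .
qed

lemma key_eq:
  fixes a x :: real assumes "a > 0" "x > 0"
  shows "x + x^2/a = a + x \<longleftrightarrow> x = a"
proof -
  have "x + x^2/a = a + x \<longleftrightarrow> x^2 = a^2"
    using assms by (simp add: field_simps power2_eq_square)
  also have "\<dots> \<longleftrightarrow> x = a" using assms by (simp add: power2_eq_iff_nonneg)
  finally show ?thesis .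
qed

lemma card3:
  fixes P :: "nat \<Rightarrow> bool"
  assumes "\<not> (P 0 \<and> P 1)" "\<not> (P 0 \<and> P 2)" "\<not> (P 1 \<and> P 2)"
  shows "card {i \<in> {0,1,2::nat}. P i} \<le> 1"
proof -
  have "{i \<in> {0,1,2::nat}. P i} \<subseteq> (if P 0 then {0} else if P 1 then {1} else {2})"
    using assms by auto
  then have "card {i \<in> {0,1,2::nat}. P i} \<le> card (if P 0 then {0::nat} else if P 1 then {1} else {2})"
    by (intro card_mono) auto
  then show ?thesis by (simp split: if_splits)
qed

theorem lemma3p14:
  fixes l :: "nat \<Rightarrow> nat"
  assumes pos: "l 0 > 0" "l 1 > 0" "l 2 > 0"
  shows "card {i \<in> {0,1,2::nat}. h_idx l i \<le> height l} \<le> 1 \<and>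
         (\<forall>i \<in> {0,1,2}. h_idx l i = height l \<longrightarrow>
           mset (transformed l i (other1 i) (other2 i)) = mset [real (l 0), real (l 1), real (l 2)])"
proof -
  define a where "a = real (l 0)"
  define b where "b = real (l 1)"
  define c where "c = real (l 2)"
  have a: "a > 0" and b: "b > 0" and c: "c > 0" using pos by (auto simp: a_def b_def c_def)
  have h0: "h_idx l 0 = (b+c) + (b+c)^2/a" by (simp add: h_idx_def theight_def other1_def other2_def a_def b_def c_def)
  have h1: "h_idx l 1 = (a+c) + (a+c)^2/b" by (simp add: h_idx_def theight_def other1_def other2_def a_def b_def c_def)
  have h2: "h_idx l 2 = (a+b) + (a+b)^2/c" by (simp add: h_idx_def theight_def other1_def other2_def a_def b_def c_def)
  have H: "height l = a + b + c" by (simp add: height_def a_def b_def c_def)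
  have l0: "h_idx l 0 \<le> height l \<longleftrightarrow> b + c \<le> a"
    using key_le[of a "b+c"] a b c h0 H by (simp add: algebra_simps)
  have l1: "h_idx l 1 \<le> height l \<longleftrightarrow> a + c \<le> b"
    using key_le[of b "a+c"] a b c h1 H by (simp add: algebra_simps)
  have l2: "h_idx l 2 \<le> height l \<longleftrightarrow> a + b \<le> c"
    using key_le[of c "a+b"] a b c h2 H by (simp add: algebra_simps)
  have e0: "h_idx l 0 = height l \<longleftrightarrow> b + c = a"
    using key_eq[of a "b+c"] a b c h0 H by (simp add: algebra_simps)
  have e1: "h_idx l 1 = height l \<longleftrightarrow> a + c = b"
    using key_eq[of b "a+c"] a b c h1 H by (simp add: algebra_simps)
  have e2: "h_idx l 2 = height l \<longleftrightarrow> a + b = c"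
    using key_eq[of c "a+b"] a b c h2 H by (simp add: algebra_simps)
  have "card {i \<in> {0,1,2::nat}. h_idx l i \<le> height l} \<le> 1"
  proof -
    have n01: "\<not> (h_idx l 0 \<le> height l \<and> h_idx l 1 \<le> height l)" proof
      assume A: "h_idx l 0 \<le> height l \<and> h_idx l 1 \<le> height l"
      have "b + c \<le> a" using A l0 by blast
      moreover have "a + c \<le> b" using A l1 by blast
      ultimately show False using c by linarith
    qed
    have n02: "\<not> (h_idx l 0 \<le> height l \<and> h_idx l 2 \<le> height l)" proof
      assume A: "h_idx l 0 \<le> height l \<and> h_idx l 2 \<le> height l"
      have "b + c \<le> a" using A l0 by blast
      moreover have "a + b \<le> c" using A l2 by blast
      ultimately show False using b by linarith
    qed
    have n12: "\<not> (h_idx l 1 \<le> height l \<and> h_idx l 2 \<le> height l)" proof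
      assume A: "h_idx l 1 \<le> height l \<and> h_idx l 2 \<le> height l"
      have "a + c \<le> b" using A l1 by blast
      moreover have "a + b \<le> c" using A l2 by blast
      ultimately show False using a by linarith
    qed
    show ?thesis using card3[of "\<lambda>i. h_idx l i \<le> height l"] n01 n02 n12 by blast
  qed
  moreover have "\<forall>i \<in> {0,1,2}. h_idx l i = height l \<longrightarrow>
           mset (transformed l i (other1 i) (other2 i)) = mset [real (l 0), real (l 1), real (l 2)]"
  proof (intro ballI impI)
    fix i :: nat assume i: "i \<in> {0,1,2}" and eq: "h_idx l i = height l"
    show "mset (transformed l i (other1 i) (other2 i)) = mset [real (l 0), real (l 1), real (l 2)]"
    proof -
      { assume "i = 0"
        then have "b + c = a" using e0 eq by simp
        then have "(b+c)^2/a = a" using a by (simp add: power2_eq_square)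
        then have ?thesis using \<open>i = 0\<close>
          by (simp add: transformed_def other1_def other2_def a_def b_def c_def add_mset_commute) }
      moreover
      { assume "i = 1"
        then have "a + c = b" using e1 eq by simp
        then have "(a+c)^2/b = b" using b by (simp add: power2_eq_square)
        then have ?thesis using \<open>i = 1\<close>
          by (simp add: transformed_def other1_def other2_def a_def b_def c_def add_mset_commute) }
      moreover
      { assume "i = 2"
        then have "a + b = c" using e2 eq by simp
        then have "(a+b)^2/c = c" using c by (simp add: power2_eq_square)
        then have ?thesis using \<open>i = 2\<close>
          by (simp add: transformed_def other1_def other2_def a_def b_def c_def add_mset_commute) }
      ultimately show ?thesis using i by blast
    qed
  qed
  ultimately show ?thesis by blast
qed

end
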